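(* Let $\varphi$ be an instance of 2-Clause 3-SAT and let $G(\varphi)$ be the graph constructed from $\varphi$ as described in the context. If $\mathrm{wcol}_2(G(\varphi)) \leq 5$, then $\varphi$ has a satisfying assignment.
   Context: 2-Clause 3-SAT: given a CNF formula $\varphi$ with clauses $c_1,\dots,c_m$ over variables $x_1,\dots,x_n$ in which each clause contains at most 3 literals and each literal ($x_j$ or $\overline{x}_j$) appears in exactly 2 clauses, decide whether $\varphi$ is satisfiable. It is assumed throughout that no variable appears twice in a single clause and that there are no clauses with a single literal (so each clause has 2 or 3 literals). Construction of $G(\varphi)$: for each clause $c_i$ create 6 vertices $u_i^1,\dots,u_i^6$. If $c_i$ contains only 2 literals, add 2 more vertices $f_i, f'_i$, each adjacent to all of $u_i^1,\dots,u_i^6$. For each variable $x_j$ create two vertices $v_j$ and $v'_j$ (for the literals $x_j$ and $\overline{x}_j$) joined by an edge. For each clause $c_i$ containing the literal $x_j$, add an edge from $v_j$ to each of $u_i^1,\dots,u_i^6$; for each clause $c_i$ containing $\overline{x}_j$, add an edge from $v'_j$ to each of $u_i^1,\dots,u_i^6$. Weak coloring numbers: for a graph $G=(V,E)$ and a total order $\sigma$ of $V$, a vertex $v\neq u$ is weakly $r$-reachable from $u$ if $u <_\sigma v$ and there is a $u$–$v$ path $P$ of length at most $r$ such that every vertex $p$ of $P$ other than $u,v$ satisfies $p <_\sigma v$. Let $\mathrm{wreach}_r(u,G_\sigma)$ be the set of such $v$. Then $\mathrm{wcol}_r(G)=\min_\sigma \max_{u\in V}|\mathrm{wreach}_r(u,G_\sigma)|$,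 the minimum over all total orders of $V$. *)

theory Defs
  imports Main
begin

text \<open>A literal is a pair (j, b): (j, True) is x_j, (j, False) is
  the negated literal.\<close>

type_synonym lit = "nat \<times> bool"

definition two_clause_3sat :: "nat \<Rightarrow> nat \<Rightarrow> (nat \<Rightarrow> lit set) \<Rightarrow> bool" where
  "two_clause_3sat n m c \<longleftrightarrow>
     (\<forall>i<m. c i \<subseteq> {..<n} \<times> UNIV \<and> (card (c i) = 2 \<or> card (c i) = 3)
             \<and> (\<forall>j b b'. (j, b) \<in> c i \<and> (j, b') \<in> c i \<longrightarrow> b = b'))
   \<and> (\<forall>j<n. \<forall>b. card {i. i < m \<and> (j, b) \<in> c i} = 2)"

definition satisfiable :: "nat \<Rightarrow> nat \<Rightarrow> (nat \<Rightarrow> lit set) \<Rightarrow> bool" where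
  "satisfiable n m c \<longleftrightarrow> (\<exists>a :: nat \<Rightarrow> bool. \<forall>i<m. \<exists>(j, b) \<in> c i. a j = b)"

datatype gvert = U nat nat | F nat | F' nat | V nat | V' nat

definition gverts :: "nat \<Rightarrow> nat \<Rightarrow> (nat \<Rightarrow> lit set) \<Rightarrow> gvert set" where
  "gverts n m c =
     {U i k | i k. i < m \<and> 1 \<le> k \<and> k \<le> 6}
   \<union> {F i | i. i < m \<and> card (c i) = 2}
   \<union> {F' i | i. i < m \<and> card (c i) = 2}
   \<union> {V j | j. j < n} \<union> {V' j | j. j < n}"

definition gedge0 :: "nat \<Rightarrow> nat \<Rightarrow> (nat \<Rightarrow> lit set) \<Rightarrow> gvert \<Rightarrow> gvert \<Rightarrow> bool" where
  "gedge0 n m c x y \<longleftrightarrow>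
     (\<exists>i k. i < m \<and> card (c i) = 2 \<and> 1 \<le> k \<and> k \<le> 6 \<and> x = F i \<and> y = U i k)
   \<or> (\<exists>i k. i < m \<and> card (c i) = 2 \<and> 1 \<le> k \<and> k \<le> 6 \<and> x = F' i \<and> y = U i k)
   \<or> (\<exists>j. j < n \<and> x = V j \<and> y = V' j)
   \<or> (\<exists>i j k. i < m \<and> j < n \<and> (j, True) \<in> c i \<and> 1 \<le> k \<and> k \<le> 6 \<and> x = V j \<and> y = U i k)
   \<or> (\<exists>i j k. i < m \<and> j < n \<and> (j, False) \<in> c i \<and> 1 \<le> k \<and> k \<le> 6 \<and> x = V' j \<and> y = U i k)"

definition gedge :: "nat \<Rightarrow> nat \<Rightarrow> (nat \<Rightarrow> lit set) \<Rightarrow> gvert \<Rightarrow> gvert \<Rightarrow> bool" where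
  "gedge n m c x y \<longleftrightarrow> gedge0 n m c x y \<or> gedge0 n m c y x"

text \<open>A graph is given by a vertex set Vs and a symmetric adjacency relation E.
  A total order sigma of Vs is a linear order relation R on Vs
  (u <_sigma v iff (u,v) in R and u ~= v).\<close>

definition is_path :: "'a set \<Rightarrow> ('a \<Rightarrow> 'a \<Rightarrow> bool) \<Rightarrow> 'a list \<Rightarrow> bool" where
  "is_path Vs E P \<longleftrightarrow> P \<noteq> [] \<and> distinct P \<and> set P \<subseteq> Vs
     \<and> (\<forall>k. Suc k < length P \<longrightarrow> E (P ! k) (P ! Suc k))"

definition wreach :: "nat \<Rightarrow> 'a set \<Rightarrow> ('a \<Rightarrow> 'a \<Rightarrow> bool) \<Rightarrow> 'a rel \<Rightarrow> 'a \<Rightarrow> 'a set" where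
  "wreach r Vs E R u =
     {v \<in> Vs. v \<noteq> u \<and> (u, v) \<in> R \<and>
        (\<exists>P. is_path Vs E P \<and> hd P = u \<and> last P = v \<and> length P - 1 \<le> r
             \<and> (\<forall>p \<in> set P - {u, v}. (p, v) \<in> R \<and> p \<noteq> v))}"

definition wcol :: "nat \<Rightarrow> 'a set \<Rightarrow> ('a \<Rightarrow> 'a \<Rightarrow> bool) \<Rightarrow> nat" where
  "wcol r Vs E =
     Min {Max ((\<lambda>u. card (wreach r Vs E R u)) ` Vs) | R. linear_order_on Vs R}"

end

theory Submission
  imports Defs
begin

lemma wcol_obtain:
  assumes fin: "finite Vs" and le: "wcol r Vs E \<le> k"
  shows "\<exists>R. linear_order_on Vs R \<and> (\<forall>u\<in>Vs. card (wreach r Vs E R u) \<le> k)"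
proof -
  define S where "S = {Max ((\<lambda>u. card (wreach r Vs E R u)) ` Vs) | R. linear_order_on Vs R}"
  have "S \<subseteq> (\<lambda>R. Max ((\<lambda>u. card (wreach r Vs E R u)) ` Vs)) ` Pow (Vs \<times> Vs)"
    unfolding S_def linear_order_on_def partial_order_on_def preorder_on_def by blast
  hence finS: "finite S" using fin by (meson finite_Pow_iff finite_SigmaI finite_imageI finite_subset)
  obtain R0 where "well_order_on Vs R0" using well_order_on by blast
  hence "linear_order_on Vs R0" by (simp add: well_order_on_def)
  hence neS: "S \<noteq> {}" unfolding S_def by blast
  have "Min S \<in> S" using finS neS by (rule Min_in)
  then obtain R where R: "linear_order_on Vs R"
    and eq: "Min S = Max ((\<lambda>u. card (wreach r Vs E R u)) ` Vs)" unfolding S_def by blast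
  have "Min S \<le> k" using le unfolding wcol_def S_def by simp
  moreover have "\<forall>u\<in>Vs. card (wreach r Vs E R u) \<le> Max ((\<lambda>u. card (wreach r Vs E R u)) ` Vs)"
    using fin by simp
  ultimately show ?thesis using R eq by fastforce
qed

lemma reach1:
  assumes "u \<in> Vs" "v \<in> Vs" "v \<noteq> u" "(u, v) \<in> R" "E u v" "1 \<le> r"
  shows "v \<in> wreach r Vs E R u"
proof -
  have "is_path Vs E [u, v]" unfolding is_path_def using assms
    by (auto simp: less_Suc_eq)
  thus ?thesis unfolding wreach_def using assms by (intro CollectI conjI exI[of _ "[u,v]"]) auto
qed

lemma reach2:
  assumes "u \<in> Vs" "v \<in> Vs" "x \<in> Vs" "v \<noteq> u" "x \<noteq> u" "x \<noteq> v" "(u, v) \<in> R" "(x, v) \<in> R"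
    "E u x" "E x v" "2 \<le> r"
  shows "v \<in> wreach r Vs E R u"
proof -
  have "is_path Vs E [u, x, v]" unfolding is_path_def using assms
    by (auto simp: less_Suc_eq nth_Cons split: nat.splits)
  thus ?thesis unfolding wreach_def using assms by (intro CollectI conjI exI[of _ "[u,x,v]"]) auto
qed

lemma linear_min:
  assumes "linear_order_on A R" "finite X" "X \<noteq> {}" "X \<subseteq> A"
  shows "\<exists>z\<in>X. \<forall>y\<in>X. (z, y) \<in> R"
  using assms(2,3,4)
proof (induction X rule: finite_ne_induct)
  case (singleton x)
  then show ?case using assms(1) unfolding linear_order_on_def partial_order_on_def preorder_on_def refl_on_def
    by auto
next
  case (insert x F)
  then obtain z where z: "z \<in> F" "\<forall>y\<in>F. (z, y) \<in> R" by auto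
  have tr: "trans R" and tot: "total_on A R" and rf: "refl_on A R"
    using assms(1) unfolding linear_order_on_def partial_order_on_def preorder_on_def by auto
  show ?case
  proof (cases "(x, z) \<in> R")
    case True
    then show ?thesis using z tr rf insert.prems unfolding trans_def refl_on_def by blast
  next
    case False
    hence "(z, x) \<in> R" using tot z insert unfolding total_on_def by (metis insert_subset subsetD)
    then show ?thesis using z by auto
  qed
qed

definition litv :: "lit \<Rightarrow> gvert" where
  "litv l = (if snd l then V (fst l) else V' (fst l))"

definition comp :: "lit \<Rightarrow> gvert" where
  "comp l = litv (fst l, \<not> snd l)"

lemma litv_inj: "inj litv"
  unfolding inj_def litv_def by (auto split: if_splits simp: prod_eq_iff)

lemma comp_inj: "inj comp"
  unfolding inj_def comp_def litv_def by (auto split: if_splits simp: prod_eq_iff)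

lemma finite_gverts: "finite (gverts n m c)"
proof -
  have "{U i k | i k. i < m \<and> 1 \<le> k \<and> k \<le> 6} \<subseteq> (\<lambda>(i,k). U i k) ` ({..<m} \<times> {1..6})" by auto
  hence a: "finite {U i k | i k. i < m \<and> 1 \<le> k \<and> k \<le> 6}" by (rule finite_subset) auto
  have b: "finite {F i | i. i < m \<and> card (c i) = 2}" by (rule finite_subset[of _ "F ` {..<m}"]) auto
  have c: "finite {F' i | i. i < m \<and> card (c i) = 2}" by (rule finite_subset[of _ "F' ` {..<m}"]) auto
  have d: "finite {V j | j. j < n}" by (rule finite_subset[of _ "V ` {..<n}"]) auto
  have e: "finite {V' j | j. j < n}" by (rule finite_subset[of _ "V' ` {..<n}"]) auto
  show ?thesis unfolding gverts_def using a b c d e by blast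
qed

lemma gv_V: "j < n \<Longrightarrow> V j \<in> gverts n m c" "j < n \<Longrightarrow> V' j \<in> gverts n m c"
  unfolding gverts_def by blast+

lemma gv_U: "i < m \<Longrightarrow> 1 \<le> k \<Longrightarrow> k \<le> 6 \<Longrightarrow> U i k \<in> gverts n m c"
  unfolding gverts_def by blast

lemma gv_F: "i < m \<Longrightarrow> card (c i) = 2 \<Longrightarrow> F i \<in> gverts n m c"
  "i < m \<Longrightarrow> card (c i) = 2 \<Longrightarrow> F' i \<in> gverts n m c"
  unfolding gverts_def by blast+

lemma gv_lit: "j < n \<Longrightarrow> litv (j, b) \<in> gverts n m c" "j < n \<Longrightarrow> comp (j, b) \<in> gverts n m c"
  unfolding litv_def comp_def by (simp_all add: gv_V)

theorem lemma3p3: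
  fixes n m :: nat and c :: "nat \<Rightarrow> lit set"
  assumes "two_clause_3sat n m c"
    and "wcol 2 (gverts n m c) (gedge n m c) \<le> 5"
  shows "satisfiable n m c"
proof (rule ccontr)
  assume nsat: "\<not> satisfiable n m c"
  define Vs where "Vs = gverts n m c"
  define E where "E = gedge n m c"
  have finV: "finite Vs" unfolding Vs_def by (rule finite_gverts)
  obtain R where R: "linear_order_on Vs R" and Rc: "\<forall>u\<in>Vs. card (wreach 2 Vs E R u) \<le> 5"
    using wcol_obtain[OF finV, of 2 E 5] assms(2) unfolding Vs_def E_def by blast
  have po: "partial_order_on Vs R" and tot: "total_on Vs R"
    using R unfolding linear_order_on_def by simp_all
  have tr: "trans R" using partial_order_onD(2)[OF po] .
  define a where "a j = ((V' j, V j) \<in> R)" for j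
  have "\<not> (\<forall>i<m. \<exists>(j, b) \<in> c i. a j = b)"
    using nsat unfolding satisfiable_def by (metis (no_types))
  then obtain i where im: "i < m" and fals: "\<forall>(j, b) \<in> c i. a j \<noteq> b"
    by auto
  have ci: "c i \<subseteq> {..<n} \<times> UNIV" and cc: "card (c i) = 2 \<or> card (c i) = 3"
    and uq: "\<And>j b b'. (j, b) \<in> c i \<Longrightarrow> (j, b') \<in> c i \<Longrightarrow> b = b'"
    using assms(1) im unfolding two_clause_3sat_def by blast+
  have finc: "finite (c i)" using cc by (metis card.infinite zero_neq_numeral)
  have litvV: "litv l \<in> Vs" "comp l \<in> Vs" if "l \<in> c i" for l
  proof -
    obtain j b where l: "l = (j, b)" by force
    have jn: "j < n" using that ci l by auto
    show "litv l \<in> Vs" "comp l \<in> Vs" unfolding Vs_def l using gv_lit jn by auto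
  qed
  have lc: "(litv l, comp l) \<in> R" "litv l \<noteq> comp l" if "l \<in> c i" for l
  proof -
    obtain j b where l: "l = (j, b)" by force
    have jn: "j < n" using that ci l by auto
    have VV: "V j \<in> Vs" "V' j \<in> Vs" using jn unfolding Vs_def by (simp_all add: gv_V)
    show "litv l \<noteq> comp l" unfolding litv_def comp_def by auto
    show "(litv l, comp l) \<in> R"
    proof (cases b)
      case True
      hence "(V' j, V j) \<notin> R" using fals that l a_def by auto
      hence "(V j, V' j) \<in> R" using tot VV unfolding total_on_def by blast
      thus ?thesis using True l unfolding litv_def comp_def by simp
    next
      case False
      hence "(V' j, V j) \<in> R" using fals that l a_def by auto
      thus ?thesis using False l unfolding litv_def comp_def by simp
    qed
  qed
  define Ui where "Ui = (\<lambda>k. U i k) ` {1..6}"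
  define Ni where "Ni = litv ` c i \<union> (if card (c i) = 2 then {F i, F' i} else {})"
  have UiV: "Ui \<subseteq> Vs" unfolding Ui_def Vs_def using im gv_U by auto
  have NiV: "Ni \<subseteq> Vs" unfolding Ni_def using litvV im gv_F unfolding Vs_def by auto
  have finX: "finite (Ui \<union> Ni)" unfolding Ui_def Ni_def using finc by auto
  obtain z where z: "z \<in> Ui \<union> Ni" and zmin: "\<forall>y\<in>Ui \<union> Ni. (z, y) \<in> R"
  proof -
    have ne: "Ui \<union> Ni \<noteq> {}" unfolding Ui_def by auto
    have sub: "Ui \<union> Ni \<subseteq> Vs" using UiV NiV by (rule Un_least)
    show ?thesis using linear_min[OF R finX ne sub] that by blast
  qed
  have zV: "z \<in> Vs" using z UiV NiV by blast
  have cardU: "card Ui = 6" unfolding Ui_def by (subst card_image) (auto simp: inj_on_def)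
  have edgeUN: "E (U i k) w" "E w (U i k)" if "w \<in> Ni" "1 \<le> k" "k \<le> 6" for w k
  proof -
    have "gedge0 n m c w (U i k)"
    proof (cases "w \<in> litv ` c i")
      case True
      then obtain j b where jb: "(j, b) \<in> c i" "w = litv (j, b)" by auto
      have "j < n" using jb ci by auto
      thus ?thesis using jb im that unfolding gedge0_def litv_def by (cases b) auto
    next
      case False
      thus ?thesis using that im unfolding Ni_def gedge0_def by (auto split: if_splits)
    qed
    thus "E (U i k) w" "E w (U i k)" unfolding E_def gedge_def by auto
  qed
  have finW: "finite (wreach 2 Vs E R z)" using finV unfolding wreach_def by auto
  have le5: "card (wreach 2 Vs E R z) \<le> 5" using Rc zV by auto
  show False
  proof (cases "z \<in> Ui")
    case True
    then obtain k where k: "1 \<le> k" "k \<le> 6" "z = U i k" unfolding Ui_def by auto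
    define T where "T = Ni \<union> comp ` c i"
    have "T \<subseteq> wreach 2 Vs E R z"
    proof
      fix v assume "v \<in> T"
      then consider "v \<in> Ni" | l where "l \<in> c i" "v = comp l" unfolding T_def by auto
      then show "v \<in> wreach 2 Vs E R z"
      proof cases
        case 1
        have "v \<noteq> z" using 1 k unfolding Ni_def litv_def by (auto split: if_splits)
        then show ?thesis using 1 NiV zV zmin edgeUN k by (intro reach1) auto
      next
        case 2
        have ln: "litv l \<in> Ni" using 2 unfolding Ni_def by auto
        have zl: "(z, litv l) \<in> R" using zmin ln by auto
        have "(z, v) \<in> R" using tr zl lc[OF 2(1)] 2(2) unfolding trans_def by blast
        moreover have "E (litv l) (comp l)"
          unfolding E_def gedge_def gedge0_def litv_def comp_def using 2(1) ci by (auto)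
        ultimately show ?thesis using 2 k zV litvV lc[OF 2(1)] edgeUN[OF ln k(1,2)]
          by (intro reach2[of _ _ _ "litv l"]) (auto simp: litv_def comp_def)
      qed
    qed
    moreover have "card T = 6"
    proof -
      have d1: "litv ` c i \<inter> comp ` c i = {}"
      proof (rule ccontr)
        assume "litv ` c i \<inter> comp ` c i \<noteq> {}"
        then obtain l l' where "l \<in> c i" "l' \<in> c i" "litv l = comp l'" by auto
        thus False using uq unfolding litv_def comp_def
          by (cases l; cases l') (auto split: if_splits)
      qed
      have c1: "card (litv ` c i) = card (c i)" using litv_inj by (simp add: card_image inj_on_subset)
      have c2: "card (comp ` c i) = card (c i)" using comp_inj by (simp add: card_image inj_on_subset)
      show ?thesis
      proof (cases "card (c i) = 2")
        case True
        have "T = {F i, F' i} \<union> (litv ` c i \<union> comp ` c i)" unfolding T_def Ni_def using True by auto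
        moreover have "{F i, F' i} \<inter> (litv ` c i \<union> comp ` c i) = {}" unfolding litv_def comp_def by auto
        ultimately have "card T = 2 + (card (litv ` c i) + card (comp ` c i))"
          using finc d1 by (simp add: card_Un_disjoint)
        thus ?thesis using c1 c2 True by simp
      next
        case False
        hence "T = litv ` c i \<union> comp ` c i" "card (c i) = 3" unfolding T_def Ni_def using cc by auto
        thus ?thesis using c1 c2 d1 finc by (simp add: card_Un_disjoint)
      qed
    qed
    ultimately have "card T \<le> card (wreach 2 Vs E R z)" using card_mono[OF finW] by blast
    thus False using le5 \<open>card T = 6\<close> by linarith
  next
    case False
    hence zN: "z \<in> Ni" using z by auto
    have "Ui \<subseteq> wreach 2 Vs E R z"
    proof
      fix v assume v: "v \<in> Ui"
      then obtain k where k: "1 \<le> k" "k \<le> 6" "v = U i k" unfolding Ui_def by auto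
      have "v \<noteq> z" using v False by auto
      then show "v \<in> wreach 2 Vs E R z" using v UiV zV zmin edgeUN[OF zN k(1,2)] k by (intro reach1) auto
    qed
    hence "card Ui \<le> card (wreach 2 Vs E R z)" using card_mono[OF finW] by blast
    thus False using le5 cardU by linarith
  qed
qed

end
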